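(* Let $V\subseteq\mathcal V$ be finite and $\mathcal E,\mathcal F\in\mathit{DProg}(V)$. (1) $\mathcal E\le_T^e\mathcal F$ implies $\mathcal E\le_T^p\mathcal F$, but the converse fails in general (there exist $\mathcal E,\mathcal F$ with $\mathcal E\le_T^p\mathcal F$ and not $\mathcal E\le_T^e\mathcal F$). (2) $\mathcal E\le_P^e\mathcal F$ implies $\mathcal E\le_P^p\mathcal F$, but the converse fails in general.
   Context: $\mathcal V$ is a countably infinite set of qubit variables; $\mathcal H_V=\bigotimes_{q\in V}\mathcal H_q$. $\mathcal D(\mathcal H)$: partial density operators; $\mathcal P(\mathcal H)$: effects (positive operators with eigenvalues in $[0,1]$); $\mathcal S(\mathcal H)$: projectors. $\mathit{DProg}(V)$: completely positive trace-nonincreasing super-operators on $\mathcal L(\mathcal H_V)$. Operators/super-operators on subsystems are implicitly extended by tensoring with identities. For finite $W$ and $M,N\in\mathcal P(\mathcal H_W)$: $\mathcal E\models_{tot}(M,N)$ iff for all finite $X\supseteq V\cup W$ and $\rho\in\mathcal D(\mathcal H_X)$, ${\rm tr}(M\rho)\le{\rm tr}(N\mathcal E(\rho))$; $\mathcal E\models_{par}(M,N)$ iff for all such $X,\rho$, ${\rm tr}(M\rho)\le{\rm tr}(N\mathcal E(\rho))+{\rm tr}(\rho)-{\rm tr}(\mathcal E(\rho))$. $\mathcal E\le_T^e\mathcal F$ iff for every finite $W$ and $M,N\in\mathcal P(\mathcal H_W)$, $\mathcal E\models_{tot}(M,N)\Rightarrow\mathcal F\models_{tot}(M,N)$; $\le_T^p$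 is defined identically but with $M,N$ ranging only over projectors $\mathcal S(\mathcal H_W)$; $\le_P^e,\le_P^p$ likewise with $\models_{par}$. *)

theory Defs
  imports Complex_Main
begin

text \<open>Qubit variables are natural numbers (a countably infinite set).
  A computational-basis state of the register X is an assignment nat \<Rightarrow> bool
  that is False outside X.  An operator on H_X is a matrix indexed by such
  assignments, represented as a function that vanishes outside the basis of X.\<close>

type_synonym bas = "nat \<Rightarrow> bool"
type_synonym qop = "bas \<Rightarrow> bas \<Rightarrow> complex"
type_synonym sop = "qop \<Rightarrow> qop"

definition basis :: "nat set \<Rightarrow> bas set" where
  "basis X = {s. \<forall>q. q \<notin> X \<longrightarrow> \<not> s q}"

definition restr :: "bas \<Rightarrow> nat set \<Rightarrow> bas" where
  "restr s W = (\<lambda>q. if q \<in> W then s q else False)"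

definition is_op :: "nat set \<Rightarrow> qop \<Rightarrow> bool" where
  "is_op X A \<longleftrightarrow> (\<forall>s t. s \<notin> basis X \<or> t \<notin> basis X \<longrightarrow> A s t = 0)"

definition idop :: "nat set \<Rightarrow> qop" where
  "idop X = (\<lambda>s t. if s \<in> basis X \<and> s = t then 1 else 0)"

definition qtr :: "nat set \<Rightarrow> qop \<Rightarrow> complex" where
  "qtr X A = (\<Sum>s\<in>basis X. A s s)"

definition qmult :: "nat set \<Rightarrow> qop \<Rightarrow> qop \<Rightarrow> qop" where
  "qmult X A B = (\<lambda>s t. \<Sum>u\<in>basis X. A s u * B u t)"

definition psd :: "nat set \<Rightarrow> qop \<Rightarrow> bool" where
  "psd X A \<longleftrightarrow> is_op X A \<and>
     (\<forall>v :: bas \<Rightarrow> complex.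
        let z = (\<Sum>s\<in>basis X. \<Sum>t\<in>basis X. cnj (v s) * A s t * v t)
        in Im z = 0 \<and> Re z \<ge> 0)"

definition pdo :: "nat set \<Rightarrow> qop \<Rightarrow> bool" where
  "pdo X \<rho> \<longleftrightarrow> psd X \<rho> \<and> Re (qtr X \<rho>) \<le> 1"

definition effect :: "nat set \<Rightarrow> qop \<Rightarrow> bool" where
  "effect X M \<longleftrightarrow> psd X M \<and> psd X (\<lambda>s t. idop X s t - M s t)"

definition projector :: "nat set \<Rightarrow> qop \<Rightarrow> bool" where
  "projector X M \<longleftrightarrow> is_op X M \<and> (\<forall>s t. M s t = cnj (M t s)) \<and> qmult X M M = M"

text \<open>Cylindrical extension A \<otimes> I_{X - W} of an operator A on H_W (W \<subseteq> X).\<close>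
definition ext :: "nat set \<Rightarrow> nat set \<Rightarrow> qop \<Rightarrow> qop" where
  "ext W X A = (\<lambda>s t. if s \<in> basis X \<and> t \<in> basis X \<and> (\<forall>q. q \<notin> W \<longrightarrow> s q = t q)
                        then A (restr s W) (restr t W) else 0)"

text \<open>Extension E \<otimes> id_{X - V} of a super-operator E on L(H_V) (V \<subseteq> X):
  applied blockwise, the block indexed by the (X - V)-parts of s and t.\<close>
definition sext :: "nat set \<Rightarrow> nat set \<Rightarrow> sop \<Rightarrow> qop \<Rightarrow> qop" where
  "sext V X E \<rho> = (\<lambda>s t. if s \<in> basis X \<and> t \<in> basis X then
      E (\<lambda>a b. if a \<in> basis V \<and> b \<in> basis V then
                 \<rho> (\<lambda>q. if q \<in> V then a q else s q) (\<lambda>q. if q \<in> V then b q else t q)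
               else 0) (restr s V) (restr t V)
    else 0)"

text \<open>Complete positivity: E \<otimes> id is positive for every ancilla register of qubit
  variables (there are infinitely many variables, so every finite ancilla
  dimension is dominated).\<close>
definition DProg :: "nat set \<Rightarrow> sop \<Rightarrow> bool" where
  "DProg V E \<longleftrightarrow>
     (\<forall>A. is_op V A \<longrightarrow> is_op V (E A)) \<and>
     (\<forall>A B c. is_op V A \<longrightarrow> is_op V B \<longrightarrow>
        E (\<lambda>s t. c * A s t + B s t) = (\<lambda>s t. c * E A s t + E B s t)) \<and>
     (\<forall>X. finite X \<longrightarrow> V \<subseteq> X \<longrightarrow> (\<forall>\<rho>. psd X \<rho> \<longrightarrow> psd X (sext V X E \<rho>))) \<and>
     (\<forall>\<rho>. psd V \<rho> \<longrightarrow> Re (qtr V (E \<rho>)) \<le> Re (qtr V \<rho>))"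

definition sat_tot :: "nat set \<Rightarrow> sop \<Rightarrow> nat set \<Rightarrow> qop \<Rightarrow> qop \<Rightarrow> bool" where
  "sat_tot V E W M N \<longleftrightarrow>
     (\<forall>X \<rho>. finite X \<longrightarrow> V \<union> W \<subseteq> X \<longrightarrow> pdo X \<rho> \<longrightarrow>
        Re (qtr X (qmult X (ext W X M) \<rho>))
          \<le> Re (qtr X (qmult X (ext W X N) (sext V X E \<rho>))))"

definition sat_par :: "nat set \<Rightarrow> sop \<Rightarrow> nat set \<Rightarrow> qop \<Rightarrow> qop \<Rightarrow> bool" where
  "sat_par V E W M N \<longleftrightarrow>
     (\<forall>X \<rho>. finite X \<longrightarrow> V \<union> W \<subseteq> X \<longrightarrow> pdo X \<rho> \<longrightarrow>
        Re (qtr X (qmult X (ext W X M) \<rho>))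
          \<le> Re (qtr X (qmult X (ext W X N) (sext V X E \<rho>)))
             + Re (qtr X \<rho>) - Re (qtr X (sext V X E \<rho>)))"

definition le_T_e :: "nat set \<Rightarrow> sop \<Rightarrow> sop \<Rightarrow> bool" where
  "le_T_e V E F \<longleftrightarrow> (\<forall>W M N. finite W \<longrightarrow> effect W M \<longrightarrow> effect W N \<longrightarrow>
      sat_tot V E W M N \<longrightarrow> sat_tot V F W M N)"

definition le_T_p :: "nat set \<Rightarrow> sop \<Rightarrow> sop \<Rightarrow> bool" where
  "le_T_p V E F \<longleftrightarrow> (\<forall>W M N. finite W \<longrightarrow> projector W M \<longrightarrow> projector W N \<longrightarrow>
      sat_tot V E W M N \<longrightarrow> sat_tot V F W M N)"

definition le_P_e :: "nat set \<Rightarrow> sop \<Rightarrow> sop \<Rightarrow> bool" where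
  "le_P_e V E F \<longleftrightarrow> (\<forall>W M N. finite W \<longrightarrow> effect W M \<longrightarrow> effect W N \<longrightarrow>
      sat_par V E W M N \<longrightarrow> sat_par V F W M N)"

definition le_P_p :: "nat set \<Rightarrow> sop \<Rightarrow> sop \<Rightarrow> bool" where
  "le_P_p V E F \<longleftrightarrow> (\<forall>W M N. finite W \<longrightarrow> projector W M \<longrightarrow> projector W N \<longrightarrow>
      sat_par V E W M N \<longrightarrow> sat_par V F W M N)"

end

theory Submission
  imports Defs
begin


lemma finite_basis: assumes "finite X" shows "finite (basis X)"
proof -
  have "basis X \<subseteq> (\<lambda>S q. q \<in> S) ` Pow X"
  proof
    fix s assume "s \<in> basis X"
    hence "{q. s q} \<subseteq> X" and "s = (\<lambda>q. q \<in> {q. s q})" by (auto simp: basis_def)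
    thus "s \<in> (\<lambda>S q. q \<in> S) ` Pow X" by blast
  qed
  thus ?thesis using assms by (meson finite_Pow_iff finite_imageI finite_subset)
qed

lemma sum_cnj_sq: "(\<Sum>k\<in>B. cnj (y k) * y k) = complex_of_real (\<Sum>k\<in>B. (cmod (y k))^2)"
  unfolding of_real_sum by (intro sum.cong refl) (metis complex_norm_square of_real_power mult.commute)

lemma proj_sq: "projector X A \<Longrightarrow> A s t = (\<Sum>k\<in>basis X. A s k * A k t)"
  unfolding projector_def by (metis qmult_def)

lemma proj_herm: "projector X A \<Longrightarrow> A s t = cnj (A t s)"
  unfolding projector_def by blast

lemma proj_is_op: "projector X P \<Longrightarrow> is_op X P" unfolding projector_def by blast

lemma proj_idem: "projector X P \<Longrightarrow> qmult X P P = P" unfolding projector_def by blast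

lemma proj_form:
  assumes "projector X A"
  shows "(\<Sum>s\<in>basis X. \<Sum>t\<in>basis X. cnj (w s) * A s t * w t)
       = (\<Sum>k\<in>basis X. cnj (\<Sum>t\<in>basis X. A k t * w t) * (\<Sum>t\<in>basis X. A k t * w t))"
proof -
  let ?B = "basis X"
  have "(\<Sum>s\<in>?B. \<Sum>t\<in>?B. cnj (w s) * A s t * w t)
      = (\<Sum>s\<in>?B. \<Sum>t\<in>?B. cnj (w s) * (\<Sum>k\<in>?B. A s k * A k t) * w t)"
    by (subst proj_sq[OF assms]) (rule refl)
  also have "\<dots> = (\<Sum>s\<in>?B. \<Sum>t\<in>?B. \<Sum>k\<in>?B. cnj (w s) * A s k * A k t * w t)"
    by (simp add: sum_distrib_left sum_distrib_right mult.assoc)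
  also have "\<dots> = (\<Sum>s\<in>?B. \<Sum>k\<in>?B. \<Sum>t\<in>?B. cnj (w s) * A s k * A k t * w t)"
    by (subst sum.swap) (rule refl)
  also have "\<dots> = (\<Sum>k\<in>?B. \<Sum>s\<in>?B. \<Sum>t\<in>?B. cnj (w s) * A s k * A k t * w t)"
    by (rule sum.swap)
  also have "\<dots> = (\<Sum>k\<in>?B. \<Sum>s\<in>?B. \<Sum>t\<in>?B. (cnj (A k s) * cnj (w s)) * (A k t * w t))"
    by (intro sum.cong refl) (subst (2) proj_herm[OF assms], simp add: mult_ac)
  also have "\<dots> = (\<Sum>k\<in>?B. cnj (\<Sum>t\<in>?B. A k t * w t) * (\<Sum>t\<in>?B. A k t * w t))"
    by (simp add: sum_product)
  finally show ?thesis .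
qed

lemma proj_psd: assumes "projector X A" shows "psd X A"
  unfolding psd_def Let_def
proof (intro conjI allI)
  show "is_op X A" using assms by (rule proj_is_op)
  fix v :: "bas \<Rightarrow> complex"
  have e: "(\<Sum>s\<in>basis X. \<Sum>t\<in>basis X. cnj (v s) * A s t * v t)
    = complex_of_real (\<Sum>k\<in>basis X. (cmod (\<Sum>t\<in>basis X. A k t * v t))^2)"
    by (simp only: proj_form[OF assms] sum_cnj_sq)
  show "Im (\<Sum>s\<in>basis X. \<Sum>t\<in>basis X. cnj (v s) * A s t * v t) = 0"
    unfolding e by (simp only: Im_complex_of_real)
  show "0 \<le> Re (\<Sum>s\<in>basis X. \<Sum>t\<in>basis X. cnj (v s) * A s t * v t)"
    unfolding e Re_complex_of_real by (simp add: sum_nonneg)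
qed


lemma idop_left: assumes "finite X"
  shows "(\<Sum>u\<in>basis X. idop X s u * f u) = (if s \<in> basis X then f s else 0)"
proof -
  have "(\<Sum>u\<in>basis X. idop X s u * f u) = (\<Sum>u\<in>basis X. if u = s then (if s \<in> basis X then f s else 0) else 0)"
    by (intro sum.cong refl) (auto simp: idop_def)
  then show ?thesis using finite_basis[OF assms] by simp
qed

lemma idop_right: assumes "finite X"
  shows "(\<Sum>u\<in>basis X. f u * idop X u t) = (if t \<in> basis X then f t else 0)"
proof -
  have "(\<Sum>u\<in>basis X. f u * idop X u t) = (\<Sum>u\<in>basis X. if u = t then (if t \<in> basis X then f t else 0) else 0)"
    by (intro sum.cong refl) (auto simp: idop_def)
  then show ?thesis using finite_basis[OF assms] by simp
qed

lemma is_op_idop: "is_op X (idop X)"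
  by (simp add: is_op_def idop_def)

lemma idop_proj: assumes "finite X" shows "projector X (idop X)"
  unfolding projector_def
proof (intro conjI allI)
  show "is_op X (idop X)" by (rule is_op_idop)
  fix s t show "idop X s t = cnj (idop X t s)" by (auto simp add: idop_def)
next
  show "qmult X (idop X) (idop X) = idop X"
    by (intro ext) (subst qmult_def, subst idop_left[OF assms], auto simp add: idop_def)
qed

lemma qmult_diff:
  assumes "is_op X A" "is_op X B" "finite X"
  shows "qmult X (\<lambda>s t. idop X s t - A s t) (\<lambda>s t. idop X s t - B s t)
       = (\<lambda>s t. idop X s t - A s t - B s t + qmult X A B s t)"
proof (intro ext)
  fix s t
  have "qmult X (\<lambda>s t. idop X s t - A s t) (\<lambda>s t. idop X s t - B s t) s t
    = (\<Sum>u\<in>basis X. idop X s u * idop X u t) - (\<Sum>u\<in>basis X. idop X s u * B u t)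
      - (\<Sum>u\<in>basis X. A s u * idop X u t) + (\<Sum>u\<in>basis X. A s u * B u t)"
    by (simp add: qmult_def algebra_simps sum.distrib sum_subtractf)
  also have "\<dots> = idop X s t - A s t - B s t + qmult X A B s t"
    using assms by (simp add: idop_left[OF assms(3)] idop_right[OF assms(3)] qmult_def is_op_def) (simp add: idop_def)
  finally show "qmult X (\<lambda>s t. idop X s t - A s t) (\<lambda>s t. idop X s t - B s t) s t
       = idop X s t - A s t - B s t + qmult X A B s t" .
qed

lemma proj_compl: assumes "projector X A" "finite X" shows "projector X (\<lambda>s t. idop X s t - A s t)"
  unfolding projector_def
proof (intro conjI allI)
  show "is_op X (\<lambda>s t. idop X s t - A s t)" using proj_is_op[OF assms(1)]
    by (simp add: is_op_def idop_def)
  fix s t show "idop X s t - A s t = cnj (idop X t s - A t s)"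
    using proj_herm[OF assms(1), of s t] by (auto simp add: idop_def)
next
  have "qmult X A A = A" using assms by (simp add: proj_idem)
  then show "qmult X (\<lambda>s t. idop X s t - A s t) (\<lambda>s t. idop X s t - A s t) = (\<lambda>s t. idop X s t - A s t)"
    by (simp add: qmult_diff[OF proj_is_op[OF assms(1)] proj_is_op[OF assms(1)] assms(2)])
qed

lemma proj_effect: assumes "projector X A" "finite X" shows "effect X A"
  using assms proj_psd proj_compl effect_def by blast

lemma ext_mult:
  assumes "W \<subseteq> X" "finite X"
  shows "qmult X (ext W X A) (ext W X B) = ext W X (qmult W A B)"
proof (intro ext)
  fix s t
  show "qmult X (ext W X A) (ext W X B) s t = ext W X (qmult W A B) s t"
  proof (cases "s \<in> basis X \<and> t \<in> basis X \<and> (\<forall>q. q \<notin> W \<longrightarrow> s q = t q)")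
    case False
    then have *: "\<And>u. ext W X A s u * ext W X B u t = 0" by (auto simp: ext_def)
    have "qmult X (ext W X A) (ext W X B) s t = 0" unfolding qmult_def using * by (simp del: mult_eq_0_iff)
    moreover have "ext W X (qmult W A B) s t = 0" using False unfolding ext_def by meson
    ultimately show ?thesis by simp
  next
    case True
    let ?U = "{u \<in> basis X. \<forall>q. q \<notin> W \<longrightarrow> u q = s q}"
    have "qmult X (ext W X A) (ext W X B) s t = (\<Sum>u\<in>basis X. if u \<in> ?U then A (restr s W) (restr u W) * B (restr u W) (restr t W) else 0)"
      unfolding qmult_def using True by (intro sum.cong refl) (auto simp: ext_def)
    also have "\<dots> = (\<Sum>u\<in>?U. A (restr s W) (restr u W) * B (restr u W) (restr t W))"
      using finite_basis[OF assms(2)] by (simp add: sum.inter_filter)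
    also have "\<dots> = (\<Sum>a\<in>basis W. A (restr s W) a * B a (restr t W))"
    proof (rule sum.reindex_bij_betw)
      show "bij_betw (\<lambda>u. restr u W) ?U (basis W)"
      proof (rule bij_betw_byWitness[where f' = "\<lambda>a q. if q \<in> W then a q else s q"])
        show "(\<lambda>u. restr u W) ` ?U \<subseteq> basis W" by (auto simp: restr_def basis_def)
        show "(\<lambda>a q. if q \<in> W then a q else s q) ` basis W \<subseteq> ?U"
          using True assms(1) by (auto simp: basis_def)
        show "\<forall>x \<in> ?U. (\<lambda>q. if q \<in> W then restr x W q else s q) = x"
          by (auto simp: restr_def)
        show "\<forall>y \<in> basis W. restr (\<lambda>q. if q \<in> W then y q else s q) W = y"
          by (auto simp: restr_def basis_def)
      qed
    qed
    finally show ?thesis using True by (simp add: ext_def qmult_def)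
  qed
qed

lemma ext_proj:
  assumes "W \<subseteq> X" "finite X" "projector W M"
  shows "projector X (ext W X M)"
  unfolding projector_def
proof (intro conjI allI)
  show "is_op X (ext W X M)" by (simp add: is_op_def ext_def)
  fix s t show "ext W X M s t = cnj (ext W X M t s)"
    using proj_herm[OF assms(3), of "restr s W" "restr t W"] by (auto simp: ext_def)
next
  show "qmult X (ext W X M) (ext W X M) = ext W X M"
    using ext_mult[OF assms(1,2)] proj_idem[OF assms(3)] by simp
qed


definition scl :: "real \<Rightarrow> sop" where
  "scl c = (\<lambda>\<rho> s t. complex_of_real c * \<rho> s t)"

lemma psd_is_op: "psd X A \<Longrightarrow> is_op X A" by (simp add: psd_def)

lemma psd_scale: assumes "psd X A" "0 \<le> c"
  shows "psd X (\<lambda>s t. complex_of_real c * A s t)"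
  unfolding psd_def Let_def
proof (intro conjI allI)
  show "is_op X (\<lambda>s t. complex_of_real c * A s t)"
    using psd_is_op[OF assms(1)] by (simp add: is_op_def)
  fix v :: "bas \<Rightarrow> complex"
  let ?z = "(\<Sum>s\<in>basis X. \<Sum>t\<in>basis X. cnj (v s) * A s t * v t)"
  have z: "Im ?z = 0 \<and> 0 \<le> Re ?z" using assms(1) unfolding psd_def Let_def by blast
  have e: "(\<Sum>s\<in>basis X. \<Sum>t\<in>basis X. cnj (v s) * (complex_of_real c * A s t) * v t) = complex_of_real c * ?z"
    by (simp add: sum_distrib_left mult_ac)
  show "Im (\<Sum>s\<in>basis X. \<Sum>t\<in>basis X. cnj (v s) * (complex_of_real c * A s t) * v t) = 0"
    unfolding e using z by simp
  show "0 \<le> Re (\<Sum>s\<in>basis X. \<Sum>t\<in>basis X. cnj (v s) * (complex_of_real c * A s t) * v t)"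
    unfolding e using z assms(2) by simp
qed

lemma psd_diag: assumes "finite X" "psd X A" "s \<in> basis X" shows "0 \<le> Re (A s s)"
proof -
  let ?v = "\<lambda>u. if u = s then (1::complex) else 0"
  have H: "\<forall>v::bas\<Rightarrow>complex. 0 \<le> Re (\<Sum>s'\<in>basis X. \<Sum>t\<in>basis X. cnj (v s') * A s' t * v t)"
    using assms(2) unfolding psd_def Let_def by blast
  have "0 \<le> Re (\<Sum>s'\<in>basis X. \<Sum>t\<in>basis X. cnj (?v s') * A s' t * ?v t)"
    by (rule spec[OF H])
  also have "(\<Sum>s'\<in>basis X. \<Sum>t\<in>basis X. cnj (?v s') * A s' t * ?v t) = A s s"
  proof -
    have 1: "\<And>s'. (\<Sum>t\<in>basis X. cnj (?v s') * A s' t * ?v t) = (\<Sum>t\<in>basis X. if t = s then cnj (?v s') * A s' s else 0)"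
      by (intro sum.cong) auto
    have 2: "(\<Sum>s'\<in>basis X. cnj (?v s') * A s' s) = (\<Sum>s'\<in>basis X. if s' = s then A s s else 0)"
      by (intro sum.cong) auto
    show ?thesis unfolding 1 using finite_basis[OF assms(1)] assms(3) 2 by simp
  qed
  finally show ?thesis .
qed

lemma psd_tr: assumes "finite X" "psd X A" shows "0 \<le> Re (qtr X A)"
  unfolding qtr_def using psd_diag[OF assms] by (simp add: sum_nonneg)

lemma sext_scl: assumes "V \<subseteq> X" "is_op X \<rho>"
  shows "sext V X (scl c) \<rho> = (\<lambda>s t. complex_of_real c * \<rho> s t)"
proof (intro ext)
  fix s t
  show "sext V X (scl c) \<rho> s t = complex_of_real c * \<rho> s t"
  proof (cases "s \<in> basis X \<and> t \<in> basis X")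
    case True
    have r: "\<And>u. restr u V \<in> basis V" by (simp add: restr_def basis_def)
    have m: "\<And>u. (\<lambda>q. if q \<in> V then restr u V q else u q) = u" by (auto simp: restr_def)
    show ?thesis using True by (simp add: sext_def scl_def r m)
  next
    case False
    then show ?thesis using assms(2) by (auto simp: sext_def is_op_def)
  qed
qed

lemma qtr_scale: "qtr X (\<lambda>s t. c * A s t) = c * qtr X A"
  by (simp add: qtr_def sum_distrib_left)

lemma qmult_scale: "qmult X A (\<lambda>s t. c * B s t) = (\<lambda>s t. c * qmult X A B s t)"
  by (simp add: qmult_def sum_distrib_left mult_ac)

lemma DProg_scl: assumes "finite V" "0 \<le> c" "c \<le> 1" shows "DProg V (scl c)"
  unfolding DProg_def
proof (intro conjI allI impI)
  fix A assume "is_op V A" then show "is_op V (scl c A)" by (simp add: is_op_def scl_def)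
next
  fix A B :: qop and d :: complex
  show "scl c (\<lambda>s t. d * A s t + B s t) = (\<lambda>s t. d * scl c A s t + scl c B s t)"
    by (simp add: scl_def algebra_simps)
next
  fix X \<rho> assume "finite X" "V \<subseteq> X" "psd X \<rho>"
  then show "psd X (sext V X (scl c) \<rho>)"
    using sext_scl psd_is_op psd_scale assms(2) by metis
next
  fix \<rho> assume p: "psd V \<rho>"
  have "qtr V (scl c \<rho>) = c * qtr V \<rho>" by (simp add: scl_def qtr_scale)
  then show "Re (qtr V (scl c \<rho>)) \<le> Re (qtr V \<rho>)"
    using psd_tr[OF assms(1) p] assms(2,3) by (simp add: mult_left_le_one_le)
qed


definition rk :: "qop \<Rightarrow> bas \<Rightarrow> qop" where
  "rk P u = (\<lambda>s t. P s u * P u t)"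

lemma rk_psd: assumes "projector X P" shows "psd X (rk P u)"
  unfolding psd_def Let_def
proof (intro conjI allI)
  have "is_op X P" using assms by (rule proj_is_op)
  then show "is_op X (rk P u)" unfolding is_op_def rk_def by (metis mult_zero_left mult_zero_right)
  fix v :: "bas \<Rightarrow> complex"
  let ?x = "\<Sum>t\<in>basis X. P u t * v t"
  have "(\<Sum>s\<in>basis X. \<Sum>t\<in>basis X. cnj (v s) * rk P u s t * v t)
      = (\<Sum>s\<in>basis X. \<Sum>t\<in>basis X. (cnj (P u s) * cnj (v s)) * (P u t * v t))"
    unfolding rk_def by (intro sum.cong refl) (subst proj_herm[OF assms], simp add: mult_ac)
  also have "\<dots> = cnj ?x * ?x" by (simp add: sum_product)
  also have "\<dots> = complex_of_real ((cmod ?x)^2)"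
    by (subst complex_norm_square) (rule mult.commute)
  finally have e: "(\<Sum>s\<in>basis X. \<Sum>t\<in>basis X. cnj (v s) * rk P u s t * v t) = complex_of_real ((cmod ?x)^2)" .
  show "Im (\<Sum>s\<in>basis X. \<Sum>t\<in>basis X. cnj (v s) * rk P u s t * v t) = 0" unfolding e by simp
  show "0 \<le> Re (\<Sum>s\<in>basis X. \<Sum>t\<in>basis X. cnj (v s) * rk P u s t * v t)" unfolding e by simp
qed

lemma rk_tr: assumes "projector X P" shows "qtr X (rk P u) = P u u"
  unfolding qtr_def rk_def by (subst proj_sq[OF assms, of u u]) (simp add: mult.commute)

lemma tr_mult_rk: assumes "projector X A" "projector X P"
  shows "qtr X (qmult X A (rk P u))
       = (\<Sum>k\<in>basis X. cnj (\<Sum>t\<in>basis X. A k t * P t u) * (\<Sum>t\<in>basis X. A k t * P t u))"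
proof -
  have "qtr X (qmult X A (rk P u)) = (\<Sum>s\<in>basis X. \<Sum>t\<in>basis X. cnj (P s u) * A s t * P t u)"
    unfolding qtr_def qmult_def rk_def
    by (intro sum.cong refl) (subst proj_herm[OF assms(2), of u], simp add: mult_ac)
  also have "\<dots> = (\<Sum>k\<in>basis X. cnj (\<Sum>t\<in>basis X. A k t * P t u) * (\<Sum>t\<in>basis X. A k t * P t u))"
    by (rule proj_form[OF assms(1)])
  finally show ?thesis .
qed

lemma proj_diag: assumes "projector X P" shows "P u u = complex_of_real (\<Sum>k\<in>basis X. (cmod (P k u))^2)"
proof -
  have "P u u = (\<Sum>k\<in>basis X. cnj (P k u) * P k u)"
    by (subst proj_sq[OF assms]) (intro sum.cong refl, subst proj_herm[OF assms], simp)
  then show ?thesis by (simp add: sum_cnj_sq)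
qed

lemma tr_mult_rk_self: assumes "projector X P" shows "qtr X (qmult X P (rk P u)) = P u u"
proof -
  have "\<And>k. (\<Sum>t\<in>basis X. P k t * P t u) = P k u" using proj_sq[OF assms] by metis
  then have "qtr X (qmult X P (rk P u)) = (\<Sum>k\<in>basis X. cnj (P k u) * P k u)"
    by (simp add: tr_mult_rk[OF assms assms])
  also have "\<dots> = P u u"
    by (subst proj_sq[OF assms, of u u]) (intro sum.cong refl, subst proj_herm[OF assms, of u], simp)
  finally show ?thesis .
qed

lemma qtr_diff: "qtr X (qmult X (\<lambda>s t. A s t - B s t) \<rho>) = qtr X (qmult X A \<rho>) - qtr X (qmult X B \<rho>)"
  by (simp add: qtr_def qmult_def left_diff_distrib sum_subtractf)

lemma qtr_idop: assumes "finite X" "is_op X \<rho>" shows "qtr X (qmult X (idop X) \<rho>) = qtr X \<rho>"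
  unfolding qtr_def qmult_def by (simp add: idop_left[OF assms(1)])

lemma qtr_compl: assumes "finite X" "is_op X \<rho>"
  shows "qtr X (qmult X (\<lambda>s t. idop X s t - A s t) \<rho>) = qtr X \<rho> - qtr X (qmult X A \<rho>)"
  by (simp add: qtr_diff qtr_idop[OF assms])

lemma tr_proj_nonneg: assumes "finite X" "projector X R" "psd X \<rho>"
  shows "0 \<le> Re (qtr X (qmult X R \<rho>))"
proof -
  let ?B = "basis X"
  have H: "\<forall>v::bas\<Rightarrow>complex. 0 \<le> Re (\<Sum>s\<in>?B. \<Sum>t\<in>?B. cnj (v s) * \<rho> s t * v t)"
    using assms(3) unfolding psd_def Let_def by blast
  have "qtr X (qmult X R \<rho>) = (\<Sum>s\<in>?B. \<Sum>u\<in>?B. (\<Sum>k\<in>?B. R s k * R k u) * \<rho> u s)"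
    unfolding qtr_def qmult_def by (subst proj_sq[OF assms(2)]) (rule refl)
  also have "\<dots> = (\<Sum>s\<in>?B. \<Sum>u\<in>?B. \<Sum>k\<in>?B. R s k * R k u * \<rho> u s)"
    by (simp add: sum_distrib_right)
  also have "\<dots> = (\<Sum>s\<in>?B. \<Sum>k\<in>?B. \<Sum>u\<in>?B. R s k * R k u * \<rho> u s)"
    by (subst sum.swap) (rule refl)
  also have "\<dots> = (\<Sum>k\<in>?B. \<Sum>s\<in>?B. \<Sum>u\<in>?B. R s k * R k u * \<rho> u s)"
    by (rule sum.swap)
  also have "\<dots> = (\<Sum>k\<in>?B. \<Sum>u\<in>?B. \<Sum>s\<in>?B. R s k * R k u * \<rho> u s)"
    by (subst (2) sum.swap) (rule refl)
  also have "\<dots> = (\<Sum>k\<in>?B. \<Sum>u\<in>?B. \<Sum>s\<in>?B. cnj (R u k) * \<rho> u s * R s k)"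
    by (intro sum.cong refl) (subst (2) proj_herm[OF assms(2)], simp add: mult_ac)
  finally have e: "Re (qtr X (qmult X R \<rho>)) = (\<Sum>k\<in>?B. Re (\<Sum>u\<in>?B. \<Sum>s\<in>?B. cnj (R u k) * \<rho> u s * R s k))"
    by simp
  show ?thesis unfolding e
  proof (rule sum_nonneg)
    fix k show "0 \<le> Re (\<Sum>u\<in>?B. \<Sum>s\<in>?B. cnj (R u k) * \<rho> u s * R s k)"
      using spec[OF H, of "\<lambda>x. R x k"] by simp
  qed
qed

lemma psd_to_pdo: assumes "finite X" "psd X \<sigma>"
  shows "\<exists>k>0. pdo X (\<lambda>s t. complex_of_real k * \<sigma> s t)"
proof -
  let ?r = "Re (qtr X \<sigma>)"
  have r0: "0 \<le> ?r" by (rule psd_tr[OF assms])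
  define k where "k = 1 / (1 + ?r)"
  have k0: "k > 0" using r0 by (simp add: k_def)
  have "k * ?r \<le> 1" using r0 by (simp add: k_def field_simps)
  then have "pdo X (\<lambda>s t. complex_of_real k * \<sigma> s t)"
    unfolding pdo_def using psd_scale[OF assms(2)] k0 by (simp add: qtr_scale)
  then show ?thesis using k0 by blast
qed



lemma pdo_psd: "pdo X \<rho> \<Longrightarrow> psd X \<rho>" by (simp add: pdo_def)

lemma sum_sq_zero:
  assumes "finite B" "Re (complex_of_real (\<Sum>k\<in>B. (cmod (y k))^2)) \<le> 0" "k \<in> B"
  shows "y k = 0"
proof -
  have "(\<Sum>k\<in>B. (cmod (y k))^2) = 0"
    using assms(2) by (simp add: antisym sum_nonneg)
  then have "(cmod (y k))^2 = 0" using assms(1,3) by (simp add: sum_nonneg_eq_0_iff)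
  then show ?thesis by simp
qed

lemma T_p_ex: assumes "finite V" shows "le_T_p V (scl (1/2)) (scl 0)"
  unfolding le_T_p_def
proof (intro allI impI)
  fix W M N
  assume fW: "finite W" and pM: "projector W M" and pN: "projector W N"
     and H: "sat_tot V (scl (1/2)) W M N"
  show "sat_tot V (scl 0) W M N"
    unfolding sat_tot_def
  proof (intro allI impI)
    fix X \<rho> assume fX: "finite X" and sub: "V \<union> W \<subseteq> X" and p\<rho>: "pdo X \<rho>"
    let ?P = "ext W X M" and ?Q = "ext W X N" and ?B = "basis X"
    have PP: "projector X ?P" using ext_proj[OF _ fX pM] sub by blast
    have PQ: "projector X ?Q" using ext_proj[OF _ fX pN] sub by blast
    have Hx: "Re (qtr X (qmult X ?P \<sigma>)) \<le> 1/2 * Re (qtr X (qmult X ?Q \<sigma>))" if ps0: "psd X \<sigma>" for \<sigma>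
    proof -
      obtain k where k: "k > 0" "pdo X (\<lambda>s t. complex_of_real k * \<sigma> s t)"
        using psd_to_pdo[OF fX ps0] by blast
      have "Re (qtr X (qmult X ?P (\<lambda>s t. complex_of_real k * \<sigma> s t)))
          \<le> Re (qtr X (qmult X ?Q (sext V X (scl (1/2)) (\<lambda>s t. complex_of_real k * \<sigma> s t))))"
        using H fX sub k(2) unfolding sat_tot_def by blast
      also have "sext V X (scl (1/2)) (\<lambda>s t. complex_of_real k * \<sigma> s t)
          = (\<lambda>s t. complex_of_real (1/2) * (complex_of_real k * \<sigma> s t))"
        using sext_scl[of V X "\<lambda>s t. complex_of_real k * \<sigma> s t"] sub k(2) psd_is_op pdo_psd by blast
      finally have "Re (qtr X (qmult X ?P (\<lambda>s t. complex_of_real k * \<sigma> s t)))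
          \<le> Re (qtr X (qmult X ?Q (\<lambda>s t. complex_of_real (1/2) * (complex_of_real k * \<sigma> s t))))" .
      then have "k * Re (qtr X (qmult X ?P \<sigma>)) \<le> k * (1/2 * Re (qtr X (qmult X ?Q \<sigma>)))"
        unfolding qmult_scale qtr_scale by simp
      then show ?thesis using k(1) by simp
    qed
    have zero: "?P a b = 0" if "a \<in> ?B" "b \<in> ?B" for a b
    proof -
      have ps: "psd X (rk ?P b)" by (rule rk_psd[OF PP])
      have "Re (qtr X (qmult X ?Q (rk ?P b))) \<le> Re (qtr X (rk ?P b))"
        using tr_proj_nonneg[OF fX proj_compl[OF PQ fX] ps] qtr_compl[OF fX psd_is_op[OF ps]] by simp
      then have "Re (?P b b) \<le> 1/2 * Re (?P b b)"
        using Hx[OF ps] tr_mult_rk_self[OF PP] rk_tr[OF PP] by simp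
      then have h: "Re (?P b b) \<le> 0" by simp
      have "Re (complex_of_real (\<Sum>k\<in>?B. (cmod (?P k b))^2)) \<le> 0"
        using h by (simp only: proj_diag[OF PP, of b, symmetric])
      from sum_sq_zero[OF finite_basis[OF fX] this that(1)] show ?thesis .
    qed
    have "?P = (\<lambda>a b. 0)"
    proof (intro ext)
      fix a b show "?P a b = 0"
        using zero proj_is_op[OF PP] unfolding is_op_def by blast
    qed
    then show "Re (qtr X (qmult X ?P \<rho>)) \<le> Re (qtr X (qmult X ?Q (sext V X (scl 0) \<rho>)))"
      using sext_scl[of V X \<rho> 0] sub psd_is_op[OF pdo_psd[OF p\<rho>]]
      by (simp add: qtr_def qmult_def)
  qed
qed


lemma qmult_diff2: "qmult X (\<lambda>s t. A s t - B s t) (\<lambda>s t. C s t - D s t)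
   = (\<lambda>s t. qmult X A C s t - qmult X A D s t - qmult X B C s t + qmult X B D s t)"
  by (intro ext) (simp add: qmult_def algebra_simps sum.distrib sum_subtractf)

lemma P_p_ex: assumes "finite V" shows "le_P_p V (scl (1/2)) (scl 1)"
  unfolding le_P_p_def
proof (intro allI impI)
  fix W M N
  assume fW: "finite W" and pM: "projector W M" and pN: "projector W N"
     and H: "sat_par V (scl (1/2)) W M N"
  show "sat_par V (scl 1) W M N"
    unfolding sat_par_def
  proof (intro allI impI)
    fix X \<rho> assume fX: "finite X" and sub: "V \<union> W \<subseteq> X" and p\<rho>: "pdo X \<rho>"
    let ?P = "ext W X M" and ?Q = "ext W X N" and ?B = "basis X"
    let ?A = "\<lambda>s t. idop X s t - ?Q s t"
    have PP: "projector X ?P" using ext_proj[OF _ fX pM] sub by blast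
    have PQ: "projector X ?Q" using ext_proj[OF _ fX pN] sub by blast
    have PA: "projector X ?A" by (rule proj_compl[OF PQ fX])
    have Hx: "Re (qtr X (qmult X ?P \<sigma>)) \<le> 1/2 * Re (qtr X (qmult X ?Q \<sigma>)) + 1/2 * Re (qtr X \<sigma>)"
      if ps0: "psd X \<sigma>" for \<sigma>
    proof -
      obtain k where k: "k > 0" "pdo X (\<lambda>s t. complex_of_real k * \<sigma> s t)"
        using psd_to_pdo[OF fX ps0] by blast
      let ?s = "\<lambda>s t. complex_of_real k * \<sigma> s t"
      have e: "sext V X (scl (1/2)) ?s = (\<lambda>s t. complex_of_real (1/2) * (complex_of_real k * \<sigma> s t))"
        using sext_scl[of V X ?s] sub k(2) psd_is_op pdo_psd by blast
      have "Re (qtr X (qmult X ?P ?s))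
          \<le> Re (qtr X (qmult X ?Q (sext V X (scl (1/2)) ?s))) + Re (qtr X ?s) - Re (qtr X (sext V X (scl (1/2)) ?s))"
        using H fX sub k(2) unfolding sat_par_def by blast
      then have "k * Re (qtr X (qmult X ?P \<sigma>)) \<le> k * (1/2 * Re (qtr X (qmult X ?Q \<sigma>)) + 1/2 * Re (qtr X \<sigma>))"
        unfolding e qmult_scale qtr_scale by (simp add: algebra_simps)
      then show ?thesis using k(1) by simp
    qed
    have QP: "qmult X ?Q ?P = ?P"
    proof (intro ext)
      fix j b
      show "qmult X ?Q ?P j b = ?P j b"
      proof (cases "j \<in> ?B \<and> b \<in> ?B")
        case True
        have ps: "psd X (rk ?P b)" by (rule rk_psd[OF PP])
        have "Re (?P b b) \<le> Re (qtr X (qmult X ?Q (rk ?P b)))"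
          using Hx[OF ps] tr_mult_rk_self[OF PP] rk_tr[OF PP] by simp
        then have "Re (qtr X (qmult X ?A (rk ?P b))) \<le> 0"
          using qtr_compl[OF fX psd_is_op[OF ps]] rk_tr[OF PP] by simp
        then have "Re (complex_of_real (\<Sum>k\<in>?B. (cmod (\<Sum>t\<in>?B. ?A k t * ?P t b))^2)) \<le> 0"
          by (simp only: tr_mult_rk[OF PA PP] sum_cnj_sq)
        then have "(\<Sum>t\<in>?B. ?A j t * ?P t b) = 0"
          using sum_sq_zero[OF finite_basis[OF fX], of "\<lambda>k. \<Sum>t\<in>?B. ?A k t * ?P t b"] True by blast
        moreover have "(\<Sum>t\<in>?B. ?A j t * ?P t b) = ?P j b - qmult X ?Q ?P j b"
          using True by (simp add: left_diff_distrib sum_subtractf idop_left[OF fX] qmult_def)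
        ultimately show ?thesis by simp
      next
        case False
        then show ?thesis using proj_is_op[OF PP] proj_is_op[OF PQ]
          unfolding is_op_def qmult_def by auto
      qed
    qed
    have PQ2: "qmult X ?P ?Q = ?P"
    proof (intro ext)
      fix a b
      have "qmult X ?P ?Q a b = cnj (qmult X ?Q ?P b a)"
        unfolding qmult_def cnj_sum
        by (intro sum.cong refl) (metis proj_herm[OF PP] proj_herm[OF PQ] complex_cnj_mult mult.commute)
      also have "\<dots> = ?P a b" using QP proj_herm[OF PP, of a b] by simp
      finally show "qmult X ?P ?Q a b = ?P a b" .
    qed
    let ?R = "\<lambda>s t. ?Q s t - ?P s t"
    have PR: "projector X ?R"
      unfolding projector_def
    proof (intro conjI allI)
      show "is_op X ?R" using proj_is_op[OF PP] proj_is_op[OF PQ] by (simp add: is_op_def)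
      fix s t show "?R s t = cnj (?R t s)" using proj_herm[OF PP, of s t] proj_herm[OF PQ, of s t] by simp
    next
      have "qmult X ?Q ?Q = ?Q" "qmult X ?P ?P = ?P" using PP PQ by (simp_all add: proj_idem)
      then show "qmult X ?R ?R = ?R" by (simp add: qmult_diff2 QP PQ2)
    qed
    have "0 \<le> Re (qtr X (qmult X ?R \<rho>))" by (rule tr_proj_nonneg[OF fX PR pdo_psd[OF p\<rho>]])
    then show "Re (qtr X (qmult X ?P \<rho>)) \<le> Re (qtr X (qmult X ?Q (sext V X (scl 1) \<rho>)))
             + Re (qtr X \<rho>) - Re (qtr X (sext V X (scl 1) \<rho>))"
      using sext_scl[of V X \<rho> 1] sub psd_is_op[OF pdo_psd[OF p\<rho>]]
      by (simp add: qtr_diff)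
  qed
qed


lemma ext_cid: "ext {} X (\<lambda>s t. complex_of_real c * idop {} s t) = (\<lambda>s t. complex_of_real c * idop X s t)"
proof (intro ext)
  fix s t
  have b: "restr s {} \<in> basis {}" "restr s {} = restr t {}" by (auto simp: restr_def basis_def)
  have st: "(\<forall>q. q \<notin> {} \<longrightarrow> s q = t q) \<longleftrightarrow> s = t" by (auto simp: fun_eq_iff)
  show "ext {} X (\<lambda>s t. complex_of_real c * idop {} s t) s t = complex_of_real c * idop X s t"
    unfolding ext_def st using b by (auto simp: idop_def)
qed

lemma qmult_cid: assumes "finite X" "is_op X \<rho>"
  shows "qmult X (\<lambda>s t. complex_of_real c * idop X s t) \<rho> = (\<lambda>s t. complex_of_real c * \<rho> s t)"
proof (intro ext)
  fix s t
  have "qmult X (\<lambda>s t. complex_of_real c * idop X s t) \<rho> s t = complex_of_real c * (\<Sum>u\<in>basis X. idop X s u * \<rho> u t)"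
    by (simp add: qmult_def sum_distrib_left mult_ac)
  also have "\<dots> = complex_of_real c * \<rho> s t"
    using assms(2) by (simp add: idop_left[OF assms(1)] is_op_def)
  finally show "qmult X (\<lambda>s t. complex_of_real c * idop X s t) \<rho> s t = complex_of_real c * \<rho> s t" .
qed

lemma tr_cid: assumes "finite X" "is_op X \<rho>"
  shows "qtr X (qmult X (ext {} X (\<lambda>s t. complex_of_real c * idop {} s t)) \<rho>) = complex_of_real c * qtr X \<rho>"
  by (simp add: ext_cid qmult_cid[OF assms] qtr_scale)

lemma effect_cid: assumes "finite X" "0 \<le> c" "c \<le> 1"
  shows "effect X (\<lambda>s t. complex_of_real c * idop X s t)"
proof -
  have e: "(\<lambda>s t. idop X s t - complex_of_real c * idop X s t) = (\<lambda>s t. complex_of_real (1 - c) * idop X s t)"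
    by (simp add: algebra_simps)
  show ?thesis unfolding effect_def e
    by (intro conjI psd_scale[OF proj_psd[OF idop_proj[OF assms(1)]]]) (use assms in auto)
qed

definition zb :: bas where "zb = (\<lambda>_. False)"

lemma rho0: assumes "finite V"
  shows "pdo V (rk (idop V) zb)" "qtr V (rk (idop V) zb) = 1" "is_op V (rk (idop V) zb)"
proof -
  have z: "zb \<in> basis V" by (simp add: zb_def basis_def)
  show t: "qtr V (rk (idop V) zb) = 1" using rk_tr[OF idop_proj[OF assms]] z by (simp add: idop_def)
  show "pdo V (rk (idop V) zb)" unfolding pdo_def using rk_psd[OF idop_proj[OF assms]] t by simp
  then show "is_op V (rk (idop V) zb)" by (simp add: pdo_def psd_def)
qed

lemma not_T_e: assumes "finite V" shows "\<not> le_T_e V (scl (1/2)) (scl 0)"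
proof
  assume L: "le_T_e V (scl (1/2)) (scl 0)"
  let ?M = "\<lambda>s t. complex_of_real (1/2) * idop {} s t"
  let ?N = "\<lambda>s t. complex_of_real 1 * idop {} s t"
  have eM: "effect {} ?M" by (rule effect_cid) simp_all
  have eN: "effect {} ?N" by (rule effect_cid) simp_all
  have "sat_tot V (scl (1/2)) {} ?M ?N"
    unfolding sat_tot_def
  proof (intro allI impI)
    fix X \<rho> assume fX: "finite X" and sub: "V \<union> {} \<subseteq> X" and p: "pdo X \<rho>"
    have o: "is_op X \<rho>" using p by (simp add: pdo_def psd_def)
    have es: "sext V X (scl (1/2)) \<rho> = (\<lambda>s t. complex_of_real (1/2) * \<rho> s t)"
      using sext_scl[of V X \<rho>] sub o by blast
    have o2: "is_op X (\<lambda>s t. complex_of_real (1/2) * \<rho> s t)" using o by (simp add: is_op_def)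
    show "Re (qtr X (qmult X (ext {} X ?M) \<rho>)) \<le> Re (qtr X (qmult X (ext {} X ?N) (sext V X (scl (1/2)) \<rho>)))"
      unfolding es tr_cid[OF fX o] tr_cid[OF fX o2] qtr_scale by simp
  qed
  then have "sat_tot V (scl 0) {} ?M ?N" using L eM eN unfolding le_T_e_def by blast
  then have "Re (qtr V (qmult V (ext {} V ?M) (rk (idop V) zb)))
     \<le> Re (qtr V (qmult V (ext {} V ?N) (sext V V (scl 0) (rk (idop V) zb))))"
    unfolding sat_tot_def using assms rho0[OF assms] by blast
  moreover have es: "sext V V (scl 0) (rk (idop V) zb) = (\<lambda>s t. complex_of_real 0 * rk (idop V) zb s t)"
    using sext_scl[of V V "rk (idop V) zb" 0] rho0(3)[OF assms] by blast
  ultimately show False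
    unfolding es qmult_scale qtr_scale tr_cid[OF assms rho0(3)[OF assms]] rho0(2)[OF assms] by simp
qed

lemma not_P_e: assumes "finite V" shows "\<not> le_P_e V (scl (1/2)) (scl 1)"
proof
  assume L: "le_P_e V (scl (1/2)) (scl 1)"
  let ?M = "\<lambda>s t. complex_of_real (1/2) * idop {} s t"
  let ?N = "\<lambda>s t. complex_of_real 0 * idop {} s t"
  have eM: "effect {} ?M" by (rule effect_cid) simp_all
  have eN: "effect {} ?N" by (rule effect_cid) simp_all
  have "sat_par V (scl (1/2)) {} ?M ?N"
    unfolding sat_par_def
  proof (intro allI impI)
    fix X \<rho> assume fX: "finite X" and sub: "V \<union> {} \<subseteq> X" and p: "pdo X \<rho>"
    have o: "is_op X \<rho>" using p by (simp add: pdo_def psd_def)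
    have es: "sext V X (scl (1/2)) \<rho> = (\<lambda>s t. complex_of_real (1/2) * \<rho> s t)"
      using sext_scl[of V X \<rho>] sub o by blast
    have o2: "is_op X (\<lambda>s t. complex_of_real (1/2) * \<rho> s t)" using o by (simp add: is_op_def)
    show "Re (qtr X (qmult X (ext {} X ?M) \<rho>)) \<le> Re (qtr X (qmult X (ext {} X ?N) (sext V X (scl (1/2)) \<rho>)))
       + Re (qtr X \<rho>) - Re (qtr X (sext V X (scl (1/2)) \<rho>))"
      unfolding es tr_cid[OF fX o] tr_cid[OF fX o2] qtr_scale by simp
  qed
  then have "sat_par V (scl 1) {} ?M ?N" using L eM eN unfolding le_P_e_def by blast
  then have "Re (qtr V (qmult V (ext {} V ?M) (rk (idop V) zb)))
     \<le> Re (qtr V (qmult V (ext {} V ?N) (sext V V (scl 1) (rk (idop V) zb))))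
       + Re (qtr V (rk (idop V) zb)) - Re (qtr V (sext V V (scl 1) (rk (idop V) zb)))"
    unfolding sat_par_def using assms rho0[OF assms] by blast
  moreover have es: "sext V V (scl 1) (rk (idop V) zb) = (\<lambda>s t. complex_of_real 1 * rk (idop V) zb s t)"
    using sext_scl[of V V "rk (idop V) zb" 1] rho0(3)[OF assms] by blast
  ultimately show False
    unfolding es qmult_scale qtr_scale tr_cid[OF assms rho0(3)[OF assms]] rho0(2)[OF assms] by simp
qed

theorem proposition4p8:
  fixes V :: "nat set"
  assumes "finite V"
  shows "((\<forall>E F. DProg V E \<longrightarrow> DProg V F \<longrightarrow> le_T_e V E F \<longrightarrow> le_T_p V E F) \<and>
          (\<exists>E F. DProg V E \<and> DProg V F \<and> le_T_p V E F \<and> \<not> le_T_e V E F)) \<and>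
         ((\<forall>E F. DProg V E \<longrightarrow> DProg V F \<longrightarrow> le_P_e V E F \<longrightarrow> le_P_p V E F) \<and>
          (\<exists>E F. DProg V E \<and> DProg V F \<and> le_P_p V E F \<and> \<not> le_P_e V E F))"
proof (intro conjI)
  show "\<forall>E F. DProg V E \<longrightarrow> DProg V F \<longrightarrow> le_T_e V E F \<longrightarrow> le_T_p V E F"
    unfolding le_T_e_def le_T_p_def using proj_effect by blast
  show "\<forall>E F. DProg V E \<longrightarrow> DProg V F \<longrightarrow> le_P_e V E F \<longrightarrow> le_P_p V E F"
    unfolding le_P_e_def le_P_p_def using proj_effect by blast
  show "\<exists>E F. DProg V E \<and> DProg V F \<and> le_T_p V E F \<and> \<not> le_T_e V E F"
    using DProg_scl[OF assms, of "1/2"] DProg_scl[OF assms, of 0] T_p_ex[OF assms] not_T_e[OF assms] by auto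
  show "\<exists>E F. DProg V E \<and> DProg V F \<and> le_P_p V E F \<and> \<not> le_P_e V E F"
    using DProg_scl[OF assms, of "1/2"] DProg_scl[OF assms, of 1] P_p_ex[OF assms] not_P_e[OF assms] by auto
qed

end
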